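(* Algorithm B (defined in the context) has migration factor at most $\frac34$, and on every input whose optimal offline makespan is $1$ it produces a schedule with makespan at most $1.25$. Hence for every $M\ge\frac34$ there is a semi-online algorithm with migration factor $M$ and competitive ratio at most $\frac54$.
   Context: Model (two hierarchical machines with migration, bin stretching). Jobs $1,2,\dots,n$ arrive one by one ($n$ unknown in advance). Job $j$ has a size $p_j>0$ and a grade of service (GoS) $g_j\in\{1,2\}$; a job of GoS $1$ may only be processed on machine $m_1$, a job of GoS $2$ may be processed on $m_1$ or on $m_2$. The load of a machine is the total size of the jobs assigned to it, and the makespan is the maximum load. When job $j$ arrives, the algorithm must assign it to a machine, and at the same time it may reassign (migrate) previously arrived jobs to other machines (respecting the GoS constraints), provided that the total size of the migrated jobs is at most $M\cdot p_j$; $M\ge 0$ is the migration factor. Bin stretching: the optimal offline makespan of the complete input is known in advance and scaled to $1$. The competitive ratio is the supremum over inputs of (algorithm's makespan)/(optimal makespan). Notation: $Y_{j}$ is the set of jobs on $m_2$ just after job $j$ has been handled (including migrations), $y_j$ its total size, $y_0=0$. $p^{\max Y}_j$ and $p^{\max Y,2}_j$ are the largest and second largest sizes of jobs in $Y_{j-1}$ (each defined as $0$ if it does not exist), and $j^{\max Y}$ is a job of $Y_{j-1}$ of size $p^{\max Y}_j$. "Sorted $Y_{j-1}$" means the jobs of $Y_{j-1}$ listed in non-increasing order of size; $w_j$ denotes the total size of the set $W$ chosen when handling $j$. Algorithm B. On arrival of job $j$: Step 2: if $g_j=1$ or $y_{j-1}\ge 0.75$, assign $j$ to $m_1$. Step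 3: else if $y_{j-1}+p_j\le 1.25$, assign $j$ to $m_2$. Step 4: else if $p_j\ge 0.75$: let $W$ be the longest prefix of sorted $Y_{j-1}$ with total size at most $0.75p_j$ (possibly empty). If $y_{j-1}-w_j+p_j>1.25$, assign $j$ to $m_1$ (no migration); otherwise migrate the jobs of $W$ to $m_1$ and assign $j$ to $m_2$. Step 5: else (so $p_j<0.75$): if $p_j+p^{\max Y}_j>1.25$, assign $j$ to $m_1$. Otherwise choose $W$ as follows: if $p^{\max Y}_j\ge y_{j-1}/2$, let $W=Y_{j-1}\setminus\{j^{\max Y}\}$; if $0.25\le p^{\max Y}_j<y_{j-1}/2$, let $W=\{j^{\max Y}\}$; if $p^{\max Y}_j<0.25$, let $W$ be the shortest prefix of sorted $Y_{j-1}$ with total size at least $0.25$ (or all of $Y_{j-1}$ if none exists), and if then $w_j>0.75p_j$ replace $W$ by $Y_{j-1}\setminus W$. Migrate the jobs of $W$ to $m_1$ and assign $j$ to $m_2$. *)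

theory Defs
  imports Complex_Main
begin

text \<open>Jobs are indexed 0,1,...,n-1 (job j of the paper is job j-1 here).
  p i is the size and g i the grade of service of job i.
  A schedule of the first k jobs is given by the set Y of jobs on machine m2;
  the remaining jobs among the first k are on machine m1.\<close>

definition load :: "(nat \<Rightarrow> real) \<Rightarrow> nat set \<Rightarrow> real" where
  "load p A = (\<Sum>i\<in>A. p i)"

definition makespan :: "(nat \<Rightarrow> real) \<Rightarrow> nat \<Rightarrow> nat set \<Rightarrow> real" where
  "makespan p n S = max (load p ({..<n} - S)) (load p S)"

definition feasible :: "(nat \<Rightarrow> nat) \<Rightarrow> nat \<Rightarrow> nat set \<Rightarrow> bool" where
  "feasible g n S \<longleftrightarrow> S \<subseteq> {..<n} \<and> (\<forall>i\<in>S. g i = 2)"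

definition opt_makespan :: "(nat \<Rightarrow> real) \<Rightarrow> (nat \<Rightarrow> nat) \<Rightarrow> nat \<Rightarrow> real" where
  "opt_makespan p g n = Min (makespan p n ` {S. feasible g n S})"

definition pmax :: "(nat \<Rightarrow> real) \<Rightarrow> nat set \<Rightarrow> real" where
  "pmax p Y = (if Y = {} then 0 else Max (p ` Y))"

definition sorted_desc :: "(nat \<Rightarrow> real) \<Rightarrow> nat set \<Rightarrow> nat list \<Rightarrow> bool" where
  "sorted_desc p Y ys \<longleftrightarrow> distinct ys \<and> set ys = Y \<and> sorted_wrt (\<lambda>a b. p a \<ge> p b) ys"

definition longest_prefix_le :: "(nat \<Rightarrow> real) \<Rightarrow> nat set \<Rightarrow> real \<Rightarrow> nat set \<Rightarrow> bool" where
  "longest_prefix_le p Y c W \<longleftrightarrow>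
     (\<exists>ys k. sorted_desc p Y ys \<and> k \<le> length ys \<and>
        sum_list (map p (take k ys)) \<le> c \<and>
        (\<forall>k'. k < k' \<and> k' \<le> length ys \<longrightarrow> sum_list (map p (take k' ys)) > c) \<and>
        W = set (take k ys))"

definition shortest_prefix_ge :: "(nat \<Rightarrow> real) \<Rightarrow> nat set \<Rightarrow> real \<Rightarrow> nat set \<Rightarrow> bool" where
  "shortest_prefix_ge p Y c W \<longleftrightarrow>
     (\<exists>ys k. sorted_desc p Y ys \<and> k \<le> length ys \<and>
        ((sum_list (map p (take k ys)) \<ge> c \<and>
          (\<forall>k'. k' < k \<longrightarrow> sum_list (map p (take k' ys)) < c))
         \<or> (sum_list (map p ys) < c \<and> k = length ys)) \<and>
        W = set (take k ys))"

definition step5_W :: "(nat \<Rightarrow> real) \<Rightarrow> nat set \<Rightarrow> real \<Rightarrow> nat set \<Rightarrow> bool" where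
  "step5_W p Y pj W \<longleftrightarrow>
     (if pmax p Y \<ge> load p Y / 2 then
        (\<exists>jm. (jm \<in> Y \<and> p jm = pmax p Y \<or> Y = {}) \<and> W = Y - {jm})
      else if pmax p Y \<ge> 1/4 then
        (\<exists>jm. jm \<in> Y \<and> p jm = pmax p Y \<and> W = {jm})
      else
        (\<exists>W0. shortest_prefix_ge p Y (1/4) W0 \<and>
              W = (if load p W0 > 3/4 * pj then Y - W0 else W0)))"

text \<open>One step of Algorithm B: handling job j, given the set Y = Y_{j-1} of
  earlier jobs on m2, produces the new set Y' = Y_j of jobs on m2
  (migrations included). All possible tie-breakings are allowed.\<close>
definition B_step :: "(nat \<Rightarrow> real) \<Rightarrow> (nat \<Rightarrow> nat) \<Rightarrow> nat \<Rightarrow> nat set \<Rightarrow> nat set \<Rightarrow> bool" where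
  "B_step p g j Y Y' \<longleftrightarrow>
     (if g j = 1 \<or> load p Y \<ge> 3/4 then Y' = Y
      else if load p Y + p j \<le> 5/4 then Y' = insert j Y
      else if p j \<ge> 3/4 then
        (\<exists>W. longest_prefix_le p Y (3/4 * p j) W \<and>
             (if load p Y - load p W + p j > 5/4 then Y' = Y else Y' = insert j (Y - W)))
      else if p j + pmax p Y > 5/4 then Y' = Y
      else (\<exists>W. step5_W p Y (p j) W \<and> Y' = insert j (Y - W)))"

definition B_run :: "(nat \<Rightarrow> real) \<Rightarrow> (nat \<Rightarrow> nat) \<Rightarrow> nat \<Rightarrow> (nat \<Rightarrow> nat set) \<Rightarrow> bool" where
  "B_run p g n Ys \<longleftrightarrow> Ys 0 = {} \<and> (\<forall>j<n. B_step p g j (Ys j) (Ys (Suc j)))"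

definition migrated :: "(nat \<Rightarrow> real) \<Rightarrow> nat \<Rightarrow> nat set \<Rightarrow> nat set \<Rightarrow> real" where
  "migrated p j Y Y' = load p {i. i < j \<and> (i \<in> Y \<longleftrightarrow> i \<notin> Y')}"

end

theory Submission
  imports Defs
begin


lemma load_insert: "finite A \<Longrightarrow> j \<notin> A \<Longrightarrow> load p (insert j A) = p j + load p A"
  by (simp add: load_def)

lemma load_mono: "finite B \<Longrightarrow> A \<subseteq> B \<Longrightarrow> \<forall>i\<in>B. 0 \<le> p i \<Longrightarrow> load p A \<le> load p B"
  unfolding load_def by (rule sum_mono2) auto

lemma load_nonneg: "\<forall>i\<in>A. 0 \<le> p i \<Longrightarrow> 0 \<le> load p A"
  unfolding load_def by (rule sum_nonneg) auto

lemma load_diff: "finite B \<Longrightarrow> A \<subseteq> B \<Longrightarrow> load p (B - A) = load p B - load p A"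
  unfolding load_def by (simp add: sum_diff)

lemma load_union: "finite A \<Longrightarrow> finite B \<Longrightarrow> A \<inter> B = {} \<Longrightarrow> load p (A \<union> B) = load p A + load p B"
  unfolding load_def by (simp add: sum.union_disjoint)

lemma load_list: "distinct xs \<Longrightarrow> load p (set xs) = sum_list (map p xs)"
  unfolding load_def by (simp add: sum_list_distinct_conv_sum_set)

lemma pmax_ge: "finite Y \<Longrightarrow> i \<in> Y \<Longrightarrow> p i \<le> pmax p Y"
  unfolding pmax_def by auto

lemma pmax_ex: "finite Y \<Longrightarrow> Y \<noteq> {} \<Longrightarrow> \<exists>jm\<in>Y. p jm = pmax p Y"
proof -
  assume "finite Y" "Y \<noteq> {}"
  then have "Max (p ` Y) \<in> p ` Y" by simp
  then show ?thesis using \<open>Y \<noteq> {}\<close> unfolding pmax_def by auto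
qed

lemma pmax_empty: "pmax p {} = 0" by (simp add: pmax_def)

lemma sorted_exists: "finite Y \<Longrightarrow> \<exists>ys. sorted_desc p Y ys"
proof -
  assume f: "finite Y"
  define ys where "ys = sort_key (\<lambda>i. - p i) (sorted_list_of_set Y)"
  have "sorted (map (\<lambda>i. - p i) ys)" unfolding ys_def by (rule sorted_sort_key)
  then have "sorted_wrt (\<lambda>a b. p a \<ge> p b) ys"
    by (simp add: sorted_wrt_map)
  moreover have "distinct ys" "set ys = Y" using f unfolding ys_def by auto
  ultimately show ?thesis unfolding sorted_desc_def by blast
qed

lemma lp_exists: "finite Y \<Longrightarrow> 0 \<le> c \<Longrightarrow> \<exists>W. longest_prefix_le p Y c W"
proof -
  assume f: "finite Y" and c: "0 \<le> c"
  obtain ys where ys: "sorted_desc p Y ys" using sorted_exists[OF f] by blast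
  define K where "K = {k. k \<le> length ys \<and> sum_list (map p (take k ys)) \<le> c}"
  have fK: "finite K" unfolding K_def by auto
  have "0 \<in> K" using c unfolding K_def by auto
  then have ne: "K \<noteq> {}" by auto
  define k where "k = Max K"
  have kK: "k \<in> K" unfolding k_def using fK ne by simp
  have big: "\<forall>k'. k < k' \<and> k' \<le> length ys \<longrightarrow> sum_list (map p (take k' ys)) > c"
  proof (intro allI impI)
    fix k' assume a: "k < k' \<and> k' \<le> length ys"
    show "sum_list (map p (take k' ys)) > c"
    proof (rule ccontr)
      assume "\<not> ?thesis"
      then have "k' \<in> K" using a unfolding K_def by auto
      then have "k' \<le> k" unfolding k_def using fK by simp
      then show False using a by simp
    qed
  qed
  show ?thesis unfolding longest_prefix_le_def
    using ys kK big unfolding K_def by blast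
qed

lemma sp_exists: "finite Y \<Longrightarrow> \<exists>W. shortest_prefix_ge p Y c W"
proof -
  assume f: "finite Y"
  obtain ys where ys: "sorted_desc p Y ys" using sorted_exists[OF f] by blast
  show ?thesis
  proof (cases "sum_list (map p ys) < c")
    case True
    then show ?thesis unfolding shortest_prefix_ge_def using ys by auto
  next
    case False
    define k where "k = (LEAST k. sum_list (map p (take k ys)) \<ge> c)"
    have ex: "sum_list (map p (take (length ys) ys)) \<ge> c" using False by simp
    have k1: "sum_list (map p (take k ys)) \<ge> c" unfolding k_def by (rule LeastI, rule ex)
    have k2: "k \<le> length ys" unfolding k_def by (rule Least_le, rule ex)
    have k3: "\<forall>k'. k' < k \<longrightarrow> sum_list (map p (take k' ys)) < c"
      using not_less_Least unfolding k_def by (metis not_le)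
    show ?thesis unfolding shortest_prefix_ge_def using ys k1 k2 k3 by blast
  qed
qed



lemma step5_exists: "finite Y \<Longrightarrow> \<exists>W. step5_W p Y pj W"
proof -
  assume f: "finite Y"
  show ?thesis
  proof (cases "pmax p Y \<ge> load p Y / 2")
    case True
    show ?thesis
    proof (cases "Y = {}")
      case True then show ?thesis unfolding step5_W_def by (auto simp: pmax_empty load_def)
    next
      case False
      then obtain jm where "jm \<in> Y" "p jm = pmax p Y" using pmax_ex[OF f] by blast
      then show ?thesis using True unfolding step5_W_def by auto
    qed
  next
    case nb: False
    show ?thesis
    proof (cases "pmax p Y \<ge> 1/4")
      case True
      then have "Y \<noteq> {}" by (auto simp: pmax_empty)
      then obtain jm where "jm \<in> Y" "p jm = pmax p Y" using pmax_ex[OF f] by blast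
      then show ?thesis using True nb unfolding step5_W_def by auto
    next
      case False
      obtain W0 where "shortest_prefix_ge p Y (1/4) W0" using sp_exists[OF f] by blast
      then show ?thesis using False nb unfolding step5_W_def by auto
    qed
  qed
qed

lemma step_exists: "finite Y \<Longrightarrow> \<exists>Y'. B_step p g j Y Y'"
proof -
  assume f: "finite Y"
  obtain W where W: "longest_prefix_le p Y (3/4 * p j) W" if "p j \<ge> 3/4"
    using lp_exists[OF f, of "3/4 * p j" p] by fastforce
  obtain W5 where W5: "step5_W p Y (p j) W5" using step5_exists[OF f] by blast
  show ?thesis unfolding B_step_def
    using W W5 by (cases "load p Y - load p W + p j > 5/4") auto
qed

lemma step_finite: "finite Y \<Longrightarrow> B_step p g j Y Y' \<Longrightarrow> finite Y'"
  unfolding B_step_def by (auto split: if_splits)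

lemma run_exists: "\<exists>Ys. B_run p g n Ys"
proof -
  define Ys where "Ys = rec_nat {} (\<lambda>j Y. SOME Y'. B_step p g j Y Y' \<and> finite Y')"
  have "finite (Ys j) \<and> B_step p g j (Ys j) (Ys (Suc j))" for j
  proof (induction j)
    case 0
    have "finite (Ys 0)" unfolding Ys_def by simp
    then obtain Y' where "B_step p g 0 (Ys 0) Y'" using step_exists by blast
    then have "\<exists>Y'. B_step p g 0 (Ys 0) Y' \<and> finite Y'" using step_finite \<open>finite (Ys 0)\<close> by blast
    then have "B_step p g 0 (Ys 0) (Ys (Suc 0)) \<and> finite (Ys (Suc 0))"
      unfolding Ys_def by simp (rule someI_ex)
    then show ?case using \<open>finite (Ys 0)\<close> by simp
  next
    case (Suc j)
    have fj: "finite (Ys (Suc j))" using Suc step_finite by blast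
    then obtain Y' where "B_step p g (Suc j) (Ys (Suc j)) Y'" using step_exists by blast
    then have "\<exists>Y'. B_step p g (Suc j) (Ys (Suc j)) Y' \<and> finite Y'" using step_finite fj by blast
    then have "B_step p g (Suc j) (Ys (Suc j)) (Ys (Suc (Suc j))) \<and> finite (Ys (Suc (Suc j)))"
      unfolding Ys_def by simp (rule someI_ex)
    then show ?case using fj by simp
  qed
  moreover have "Ys 0 = {}" unfolding Ys_def by simp
  ultimately show ?thesis unfolding B_run_def by blast
qed



lemma sorted_take_ge:
  fixes p :: "nat \<Rightarrow> real"
  assumes s: "sorted_wrt (\<lambda>a b. p a \<ge> p b) ys" and k: "k < length ys"
    and i: "i \<in> set (take (Suc k) ys)"
  shows "p i \<ge> p (ys ! k)"
proof -
  obtain m where m: "m < length (take (Suc k) ys)" "i = take (Suc k) ys ! m"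
    using i by (auto simp: in_set_conv_nth)
  then have mk: "m \<le> k" and im: "i = ys ! m" using k by auto
  show ?thesis
  proof (cases "m = k")
    case True then show ?thesis using im by simp
  next
    case False
    then have "m < k" using mk by simp
    then show ?thesis using sorted_wrt_nth_less[OF s _ k] im by blast
  qed
qed

lemma lp_facts:
  assumes "longest_prefix_le p Y c W"
  shows "W \<subseteq> Y \<and> load p W \<le> c \<and>
    (W = Y \<or> (\<exists>S\<subseteq>Y. load p S > c \<and> (\<forall>i\<in>S. p i \<ge> load p S - load p W)))"
proof -
  obtain ys k where ys: "sorted_desc p Y ys" and k: "k \<le> length ys"
    and le: "sum_list (map p (take k ys)) \<le> c"
    and big: "\<forall>k'. k < k' \<and> k' \<le> length ys \<longrightarrow> sum_list (map p (take k' ys)) > c"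
    and W: "W = set (take k ys)"
    using assms unfolding longest_prefix_le_def by blast
  have d: "distinct ys" and sY: "set ys = Y" and so: "sorted_wrt (\<lambda>a b. p a \<ge> p b) ys"
    using ys unfolding sorted_desc_def by auto
  have WY: "W \<subseteq> Y" using W sY set_take_subset by fastforce
  have lW: "load p W = sum_list (map p (take k ys))"
    using W d load_list distinct_take by metis
  show ?thesis
  proof (cases "k = length ys")
    case True
    then have "W = Y" using W sY by simp
    then show ?thesis using WY lW le by simp
  next
    case False
    then have kl: "k < length ys" using k by simp
    define S where "S = set (take (Suc k) ys)"
    have SY: "S \<subseteq> Y" using S_def sY set_take_subset by fastforce
    have tk: "take (Suc k) ys = take k ys @ [ys ! k]" using kl by (simp add: take_Suc_conv_app_nth)
    have lS: "load p S = sum_list (map p (take (Suc k) ys))"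
      using S_def d load_list distinct_take by metis
    then have lS2: "load p S = load p W + p (ys ! k)" using tk lW by simp
    have "load p S > c" using big kl lS by simp
    moreover have "\<forall>i\<in>S. p i \<ge> load p S - load p W"
      using sorted_take_ge[OF so kl] lS2 S_def by simp
    ultimately show ?thesis using WY lW le SY by (simp only:) blast
  qed
qed

lemma sp_facts:
  assumes "shortest_prefix_ge p Y c W0" and c: "c > 0" and m: "\<forall>i\<in>Y. p i \<le> m"
  shows "W0 \<subseteq> Y \<and> ((load p W0 \<ge> c \<and> load p W0 < c + m) \<or> (load p Y < c \<and> W0 = Y))"
proof -
  obtain ys k where ys: "sorted_desc p Y ys" and k: "k \<le> length ys"
    and cs: "(sum_list (map p (take k ys)) \<ge> c \<and>
          (\<forall>k'. k' < k \<longrightarrow> sum_list (map p (take k' ys)) < c))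
         \<or> (sum_list (map p ys) < c \<and> k = length ys)"
    and W: "W0 = set (take k ys)"
    using assms unfolding shortest_prefix_ge_def by blast
  have d: "distinct ys" and sY: "set ys = Y"
    using ys unfolding sorted_desc_def by auto
  have WY: "W0 \<subseteq> Y" using W sY set_take_subset by fastforce
  have lW: "load p W0 = sum_list (map p (take k ys))"
    using W d load_list distinct_take by metis
  from cs show ?thesis
  proof
    assume a: "sum_list (map p (take k ys)) \<ge> c \<and>
          (\<forall>k'. k' < k \<longrightarrow> sum_list (map p (take k' ys)) < c)"
    have "k \<noteq> 0" using a c by (cases k) auto
    then obtain k0 where k0: "k = Suc k0" by (cases k) auto
    then have kl: "k0 < length ys" using k by simp
    have tk: "take k ys = take k0 ys @ [ys ! k0]" using kl k0 by (simp add: take_Suc_conv_app_nth)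
    have "sum_list (map p (take k0 ys)) < c" using a k0 by simp
    moreover have "p (ys ! k0) \<le> m" using m kl sY by auto
    ultimately have "load p W0 < c + m" using lW tk by simp
    then show ?thesis using a lW WY by simp
  next
    assume a: "sum_list (map p ys) < c \<and> k = length ys"
    then have "W0 = Y" using W sY by simp
    moreover have "load p Y < c" using a load_list[OF d, of p] sY by simp
    ultimately show ?thesis by simp
  qed
qed



lemma step5_facts:
  fixes p :: "nat \<Rightarrow> real"
  assumes f: "finite Y" and pos: "\<forall>i\<in>Y. p i > 0" and y: "load p Y < 3/4"
    and over: "load p Y + pj > 5/4" and small: "pj < 3/4" and pm: "pj + pmax p Y \<le> 5/4"
    and W: "step5_W p Y pj W"
  shows "W \<subseteq> Y \<and> load p W \<le> 3/4*pj \<and> load p Y - load p W + pj \<ge> 3/4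
     \<and> load p Y - load p W + pj \<le> 5/4"
proof -
  have pj: "pj > 1/2" using y over by simp
  have y0: "load p Y \<ge> 0" using pos by (intro load_nonneg) auto
  show ?thesis
  proof (cases "pmax p Y \<ge> load p Y / 2")
    case c1: True
    then obtain jm where jm: "jm \<in> Y \<and> p jm = pmax p Y \<or> Y = {}" and Wd: "W = Y - {jm}"
      using W unfolding step5_W_def by auto
    have "Y \<noteq> {}" using over small by (auto simp: load_def)
    then have jm: "jm \<in> Y" "p jm = pmax p Y" using jm by auto
    have lW: "load p W = load p Y - pmax p Y" using Wd jm f load_diff[of Y "{jm}" p] by (simp add: load_def)
    show ?thesis using lW c1 pj pm y over Wd by auto
  next
    case nc1: False
    show ?thesis
    proof (cases "pmax p Y \<ge> 1/4")
      case c2: True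
      then obtain jm where jm: "jm \<in> Y" "p jm = pmax p Y" and Wd: "W = {jm}"
        using W nc1 unfolding step5_W_def by auto
      have lW: "load p W = pmax p Y" using Wd jm by (simp add: load_def)
      show ?thesis using lW c2 nc1 pj pm y over Wd jm small by auto
    next
      case c3: False
      then obtain W0 where W0: "shortest_prefix_ge p Y (1/4) W0"
        and Wd: "W = (if load p W0 > 3/4 * pj then Y - W0 else W0)"
        using W nc1 unfolding step5_W_def by auto
      have m: "\<forall>i\<in>Y. p i \<le> pmax p Y" using pmax_ge[OF f] by auto
      from sp_facts[OF W0 _ m]
      have W0Y: "W0 \<subseteq> Y" and w0: "load p W0 \<ge> 1/4 \<and> load p W0 < 1/4 + pmax p Y \<or> load p Y < 1/4"
        by auto
      have w0b: "load p W0 \<ge> 1/4" "load p W0 < 1/2" using w0 c3 over small by auto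
      show ?thesis
      proof (cases "load p W0 > 3/4 * pj")
        case True
        then have "W = Y - W0" using Wd by simp
        moreover have "load p (Y - W0) = load p Y - load p W0" using load_diff[OF f W0Y] .
        ultimately show ?thesis using True w0b pj y small by auto
      next
        case False
        then have "W = W0" using Wd by simp
        then show ?thesis using False w0b pj y small over W0Y by auto
      qed
    qed
  qed
qed



lemma migrated_W: "W \<subseteq> Y \<Longrightarrow> Y \<subseteq> {..<j} \<Longrightarrow> migrated p j Y (insert j (Y - W)) = load p W"
proof -
  assume a: "W \<subseteq> Y" "Y \<subseteq> {..<j}"
  have "{i. i < j \<and> (i \<in> Y \<longleftrightarrow> i \<notin> insert j (Y - W))} = W" using a by auto
  then show ?thesis unfolding migrated_def by simp
qed

lemma migrated_same: "migrated p j Y Y = 0"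
  unfolding migrated_def load_def by simp

definition REJ :: "(nat \<Rightarrow> real) \<Rightarrow> (nat \<Rightarrow> nat) \<Rightarrow> nat \<Rightarrow> nat set \<Rightarrow> bool" where
  "REJ p g j Y \<longleftrightarrow> g j = 2 \<and> load p Y + p j > 5/4 \<and>
     ((p j \<ge> 3/4 \<and> (\<exists>S\<subseteq>Y. load p S > 3/4 * p j \<and> (\<forall>i\<in>S. p i > 1 - p j)))
      \<or> (p j < 3/4 \<and> (\<exists>i\<in>Y. p i + p j > 5/4)))"

lemma step_facts:
  fixes p :: "nat \<Rightarrow> real" and g :: "nat \<Rightarrow> nat"
  assumes Ysub: "Y \<subseteq> {..<j}" and Yg: "\<forall>i\<in>Y. g i = 2" and pos: "\<forall>i\<in>Y. p i > 0"
    and pj: "p j > 0" "p j \<le> 1" and gj: "g j \<in> {1,2}" and yb: "load p Y \<le> 5/4"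
    and st: "B_step p g j Y Y'"
  shows "Y' \<subseteq> {..<Suc j} \<and> (\<forall>i\<in>Y'. g i = 2) \<and> load p Y' \<le> 5/4
    \<and> migrated p j Y Y' \<le> 3/4 * p j \<and> (load p Y \<ge> 3/4 \<longrightarrow> Y' = Y)
    \<and> (load p Y' \<ge> 3/4 \<or> (Y' = insert j Y)
        \<or> (Y' = Y \<and> (g j = 1 \<or> load p Y \<ge> 3/4 \<or> REJ p g j Y)))"
proof -
  have f: "finite Y" using finite_subset[OF Ysub finite_lessThan] .
  have jY: "j \<notin> Y" using Ysub by auto
  have mig0: "migrated p j Y Y = 0" by (rule migrated_same)
  have y0: "load p Y \<ge> 0" using pos by (intro load_nonneg) auto
  have ins: "load p (insert j (Y - W)) = p j + load p Y - load p W" if "W \<subseteq> Y" for W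
  proof -
    have "load p (insert j (Y - W)) = p j + load p (Y - W)" using f jY by (intro load_insert) auto
    then show ?thesis using load_diff[OF f that] by simp
  qed
  have insY: "load p (insert j Y) = p j + load p Y" using load_insert[OF f jY] .
  have migins: "migrated p j Y (insert j Y) = 0" using migrated_W[of "{}" Y j p] Ysub by (simp add: load_def)
  have sub_ins: "insert j (Y - W) \<subseteq> {..<Suc j}" for W using Ysub by auto
  have g_ins: "\<forall>i\<in>insert j (Y - W). g i = 2" if "g j = 2" for W using Yg that by auto
  show ?thesis
  proof (cases "g j = 1 \<or> load p Y \<ge> 3/4")
    case True
    then have "Y' = Y" using st unfolding B_step_def by simp
    then show ?thesis using Ysub Yg yb mig0 pj True by auto
  next
    case c1: False
    then have g2: "g j = 2" and ys: "load p Y < 3/4" using gj by auto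
    show ?thesis
    proof (cases "load p Y + p j \<le> 5/4")
      case True
      then have "Y' = insert j Y" using st c1 unfolding B_step_def by simp
      then show ?thesis using sub_ins[of "{}"] g_ins[OF g2, of "{}"] insY migins True pj ys by auto
    next
      case c2: False
      show ?thesis
      proof (cases "p j \<ge> 3/4")
        case c3: True
        then obtain W where W: "longest_prefix_le p Y (3/4 * p j) W" and
          Y': "if load p Y - load p W + p j > 5/4 then Y' = Y else Y' = insert j (Y - W)"
          using st c1 c2 unfolding B_step_def by auto
        from lp_facts[OF W] have WY: "W \<subseteq> Y" and lw: "load p W \<le> 3/4 * p j"
          and alt: "W = Y \<or> (\<exists>S\<subseteq>Y. load p S > 3/4 * p j \<and> (\<forall>i\<in>S. p i \<ge> load p S - load p W))"
          by auto
        show ?thesis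
        proof (cases "load p Y - load p W + p j > 5/4")
          case True
          then have Y'Y: "Y' = Y" using Y' by simp
          have "W \<noteq> Y" using True pj by auto
          then obtain S where S: "S \<subseteq> Y" "load p S > 3/4 * p j"
            "\<forall>i\<in>S. p i \<ge> load p S - load p W" using alt by blast
          have "\<forall>i\<in>S. p i > 1 - p j"
          proof
            fix i assume "i \<in> S"
            then have "p i \<ge> load p S - load p W" using S by auto
            then show "p i > 1 - p j" using S(2) True ys c3 by linarith
          qed
          then have "REJ p g j Y" unfolding REJ_def using S g2 c2 c3 by auto
          then show ?thesis using Y'Y Ysub Yg yb mig0 pj by auto
        next
          case False
          then have Y'd: "Y' = insert j (Y - W)" using Y' by simp
          have "load p W \<le> load p Y" using f WY pos by (intro load_mono) auto
          then have "load p Y' \<ge> 3/4" using Y'd ins[OF WY] c3 by simp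
          moreover have "load p Y' \<le> 5/4" using Y'd ins[OF WY] False by simp
          moreover have "migrated p j Y Y' \<le> 3/4 * p j" using Y'd migrated_W[OF WY Ysub] lw by simp
          ultimately show ?thesis using Y'd sub_ins g_ins[OF g2] ys by auto
        qed
      next
        case c3: False
        show ?thesis
        proof (cases "p j + pmax p Y > 5/4")
          case True
          then have Y'Y: "Y' = Y" using st c1 c2 c3 unfolding B_step_def by simp
          have "Y \<noteq> {}" using True pj c3 by (auto simp: pmax_empty)
          then obtain i where i: "i \<in> Y" "p i = pmax p Y" using pmax_ex[OF f] by blast
          have "p i + p j > 5/4" using True i(2) by linarith
          then have "\<exists>i\<in>Y. p i + p j > 5/4" using i(1) by blast
          then have "REJ p g j Y" unfolding REJ_def using g2 c2 c3 by auto
          then show ?thesis using Y'Y Ysub Yg yb mig0 pj by auto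
        next
          case c4: False
          then obtain W where W: "step5_W p Y (p j) W" and Y'd: "Y' = insert j (Y - W)"
            using st c1 c2 c3 unfolding B_step_def by auto
          have pp: "p j + pmax p Y \<le> 5/4" using c4 by simp
          have "p j < 3/4" using c3 by simp
          from step5_facts[OF f pos ys _ this pp W] c2
          have WY: "W \<subseteq> Y" and h: "load p W \<le> 3/4*p j" "load p Y - load p W + p j \<ge> 3/4"
            "load p Y - load p W + p j \<le> 5/4" by auto
          have "load p Y' \<ge> 3/4" "load p Y' \<le> 5/4" using Y'd ins[OF WY] h by auto
          moreover have "migrated p j Y Y' \<le> 3/4 * p j" using Y'd migrated_W[OF WY Ysub] h by simp
          ultimately show ?thesis using Y'd sub_ins g_ins[OF g2] ys by auto
        qed
      qed
    qed
  qed
qed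



lemma opt_exists:
  assumes "opt_makespan p g n = 1"
  shows "\<exists>S0. feasible g n S0 \<and> load p ({..<n} - S0) \<le> 1 \<and> load p S0 \<le> 1"
proof -
  have fin: "finite {S. feasible g n S}"
    by (rule finite_subset[of _ "Pow {..<n}"]) (auto simp: feasible_def)
  have ne: "{S. feasible g n S} \<noteq> {}" using feasible_def by auto
  have "opt_makespan p g n \<in> makespan p n ` {S. feasible g n S}"
    unfolding opt_makespan_def using fin ne by (intro Min_in) auto
  then obtain S0 where "feasible g n S0" "makespan p n S0 = 1" using assms by auto
  then show ?thesis unfolding makespan_def by auto
qed

lemma pair_le:
  fixes p :: "nat \<Rightarrow> real"
  assumes pos: "\<forall>i<n. 0 < p i" and Oo: "Oo \<subseteq> {..<n}" "load p Oo \<le> 1"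
    and ab: "a \<in> Oo" "b \<in> Oo" "a \<noteq> b"
  shows "p a + p b \<le> 1"
proof -
  have "load p {a,b} \<le> load p Oo" using Oo ab pos by (intro load_mono) (auto intro: finite_subset)
  then show ?thesis using ab Oo(2) by (simp add: load_def)
qed



lemma run_facts:
  fixes p :: "nat \<Rightarrow> real" and g :: "nat \<Rightarrow> nat"
  assumes valid: "\<forall>i<n. 0 < p i \<and> g i \<in> {1, 2}"
    and S0: "feasible g n S0" "load p ({..<n} - S0) \<le> 1" "load p S0 \<le> 1"
    and run: "B_run p g n Ys"
  shows "(\<forall>j<n. migrated p j (Ys j) (Ys (Suc j)) \<le> 3/4 * p j)
        \<and> feasible g n (Ys n) \<and> makespan p n (Ys n) \<le> 5/4"
proof -
  have pos: "\<forall>i<n. 0 < p i" using valid by auto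
  have S0n: "S0 \<subseteq> {..<n}" and S0g: "\<forall>i\<in>S0. g i = 2" using S0(1) unfolding feasible_def by auto
  define O1 where "O1 = {..<n} - S0"
  have O1n: "O1 \<subseteq> {..<n}" unfolding O1_def by auto
  have O1l: "load p O1 \<le> 1" using S0(2) O1_def by simp
  have pair1: "p a + p b \<le> 1" if "a \<in> O1" "b \<in> O1" "a \<noteq> b" for a b
    using pair_le[OF pos O1n O1l that] .
  have pair2: "p a + p b \<le> 1" if "a \<in> S0" "b \<in> S0" "a \<noteq> b" for a b
    using pair_le[OF pos S0n S0(3) that] .
  have T: "load p {..<n} \<le> 2"
  proof -
    have "load p {..<n} = load p O1 + load p S0"
      using load_diff[of "{..<n}" S0 p] S0n O1_def by simp
    then show ?thesis using O1l S0(3) by simp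
  qed
  have p1: "p j \<le> 1" if "j < n" for j
  proof (cases "j \<in> S0")
    case True
    have "load p {j} \<le> load p S0" using True S0n pos by (intro load_mono) (auto intro: finite_subset)
    then show ?thesis using S0(3) by (simp add: load_def)
  next
    case False
    have "load p {j} \<le> load p O1" using False that O1n pos O1_def by (intro load_mono) (auto intro: finite_subset)
    then show ?thesis using O1l by (simp add: load_def)
  qed
  have Y0: "Ys 0 = {}" and st: "\<forall>j<n. B_step p g j (Ys j) (Ys (Suc j))" using run unfolding B_run_def by auto
  have inv: "Ys j \<subseteq> {..<j} \<and> (\<forall>i\<in>Ys j. g i = 2) \<and> load p (Ys j) \<le> 5/4" if "j \<le> n" for j
    using that
  proof (induction j)
    case 0 then show ?case using Y0 by (simp add: load_def)
  next
    case (Suc j)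
    then have IH: "Ys j \<subseteq> {..<j}" "\<forall>i\<in>Ys j. g i = 2" "load p (Ys j) \<le> 5/4" and jn: "j < n" by auto
    have "\<forall>i\<in>Ys j. p i > 0" using IH(1) jn pos by auto
    have a1: "p j > 0" "g j \<in> {1,2}" using valid jn by auto
    have a2: "B_step p g j (Ys j) (Ys (Suc j))" using st jn by blast
    note h = step_facts[OF IH(1,2) \<open>\<forall>i\<in>Ys j. p i > 0\<close> a1(1) p1[OF jn] a1(2) IH(3) a2]
    show ?case using h by blast
  qed
  have SF: "Ys (Suc j) \<subseteq> {..<Suc j} \<and> (\<forall>i\<in>Ys (Suc j). g i = 2) \<and> load p (Ys (Suc j)) \<le> 5/4
    \<and> migrated p j (Ys j) (Ys (Suc j)) \<le> 3/4 * p j \<and> (load p (Ys j) \<ge> 3/4 \<longrightarrow> Ys (Suc j) = Ys j)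
    \<and> (load p (Ys (Suc j)) \<ge> 3/4 \<or> (Ys (Suc j) = insert j (Ys j))
        \<or> (Ys (Suc j) = Ys j \<and> (g j = 1 \<or> load p (Ys j) \<ge> 3/4 \<or> REJ p g j (Ys j))))"
    if jn: "j < n" for j
  proof -
    have IH: "Ys j \<subseteq> {..<j}" "\<forall>i\<in>Ys j. g i = 2" "load p (Ys j) \<le> 5/4" using inv[of j] jn by auto
    have "\<forall>i\<in>Ys j. p i > 0" using IH(1) jn pos by auto
    have a1: "p j > 0" "g j \<in> {1,2}" using valid jn by auto
    have a2: "B_step p g j (Ys j) (Ys (Suc j))" using st jn by blast
    show ?thesis using step_facts[OF IH(1,2) \<open>\<forall>i\<in>Ys j. p i > 0\<close> a1(1) p1[OF jn] a1(2) IH(3) a2] .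
  qed
  have mig: "\<forall>j<n. migrated p j (Ys j) (Ys (Suc j)) \<le> 3/4 * p j" using SF by auto
  have Yn: "Ys n \<subseteq> {..<n}" "\<forall>i\<in>Ys n. g i = 2" "load p (Ys n) \<le> 5/4" using inv[of n] by auto
  have feas: "feasible g n (Ys n)" using Yn unfolding feasible_def by auto
  have M1eq: "load p ({..<n} - Ys n) = load p {..<n} - load p (Ys n)" using load_diff Yn(1) by blast
  have m1: "load p ({..<n} - Ys n) \<le> 5/4"
  proof (cases "load p (Ys n) \<ge> 3/4")
    case True
    then show ?thesis using M1eq T by simp
  next
    case small: False
    have frozen: "Ys (j + d) = Ys j" if "load p (Ys j) \<ge> 3/4" "j + d \<le> n" for j d
      using that(2)
    proof (induction d)
      case 0 then show ?case by simp
    next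
      case (Suc d)
      then have "Ys (j + d) = Ys j" by simp
      moreover have "j + d < n" using Suc by simp
      ultimately show ?case using SF[of "j + d"] that(1) by simp
    qed
    have ysm: "load p (Ys j) < 3/4" if "j \<le> n" for j
    proof (rule ccontr)
      assume "\<not> ?thesis"
      then have "Ys (j + (n - j)) = Ys j" using frozen[of j "n - j"] that by simp
      then show False using that small \<open>\<not> load p (Ys j) < 3/4\<close> by simp
    qed
    have F4: "Ys (Suc j) = insert j (Ys j) \<or> (Ys (Suc j) = Ys j \<and> (g j = 1 \<or> REJ p g j (Ys j)))"
      if "j < n" for j
      using SF[OF that] ysm[of j] ysm[of "Suc j"] that by auto
    have mono: "Ys j \<subseteq> Ys (j + d)" if "j + d \<le> n" for j d
      using that
    proof (induction d)
      case 0 then show ?case by simp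
    next
      case (Suc d)
      then show ?case using F4[of "j + d"] by auto
    qed
    have keep: "j \<in> Ys (Suc j + d) \<Longrightarrow> j \<in> Ys (Suc j)" if "Suc j + d \<le> n" for j d
      using that
    proof (induction d)
      case 0 then show ?case by simp
    next
      case (Suc d)
      then show ?case using F4[of "Suc j + d"] by auto
    qed
    have notin: "Ys (Suc j) = Ys j \<and> (g j = 1 \<or> REJ p g j (Ys j))" if "j < n" "j \<notin> Ys n" for j
    proof -
      have "j \<notin> Ys (Suc j)" using mono[of "Suc j" "n - Suc j"] that by auto
      then show ?thesis using F4[OF that(1)] by auto
    qed
    have subn: "Ys j \<subseteq> Ys n" if "j \<le> n" for j using mono[of j "n - j"] that by simp
    define G where "G = {i\<in>{..<n}. g i = 1}"
    define R where "R = {i\<in>{..<n}. g i = 2 \<and> i \<notin> Ys n}"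
    have GR: "{..<n} - Ys n = G \<union> R" using valid Yn(2) unfolding G_def R_def by force
    have GRd: "G \<inter> R = {}" unfolding G_def R_def by auto
    have fG: "finite G" "finite R" unfolding G_def R_def by auto
    have lGR: "load p ({..<n} - Ys n) = load p G + load p R" using GR GRd fG load_union by metis
    have GO1: "G \<subseteq> O1" using S0g unfolding G_def O1_def by auto
    have Rrej: "REJ p g j (Ys j)" if "j \<in> R" for j
      using notin[of j] that unfolding R_def by auto
    have big: "p j > 1/2" if "REJ p g j (Ys j)" "j \<le> n" for j
      using that ysm[of j] unfolding REJ_def by auto
    have three: False if "i < n" "j < n" "k < n" "i \<noteq> j" "i \<noteq> k" "j \<noteq> k"
      "p i > 1/2" "p j > 1/2" "p k > 1/2" for i j k
    proof -
      have "\<forall>a\<in>{i,j,k}. a \<in> S0 \<or> a \<in> O1" using that O1_def by auto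
      then have m: "i \<in> S0 \<or> i \<in> O1" "j \<in> S0 \<or> j \<in> O1" "k \<in> S0 \<or> k \<in> O1" by auto
      have "p i + p j \<le> 1 \<or> p i + p k \<le> 1 \<or> p j + p k \<le> 1"
        using m pair1[of i j] pair1[of i k] pair1[of j k] pair2[of i j] pair2[of i k] pair2[of j k] that
        by blast
      then show False using that by linarith
    qed
    have Rgen: "\<exists>i\<in>Ys j. p i > 1/2" if "REJ p g j (Ys j)" "j \<le> n" "p j < 3/4" for j
      using that unfolding REJ_def by force
    have Rle: "j = k" if "j \<in> R" "k \<in> R" "j < k" for j k
    proof -
      have jn: "j < n" "j \<notin> Ys n" and kn: "k < n" "k \<notin> Ys n" using that unfolding R_def by auto
      have rj: "REJ p g j (Ys j)" and rk: "REJ p g k (Ys k)" using Rrej that by auto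
      have bj: "p j > 1/2" and bk: "p k > 1/2" using big rj rk jn kn by auto
      have Ykn: "Ys k \<subseteq> Ys n" "Ys j \<subseteq> Ys n" using subn jn kn by auto
      have Yk: "Ys k \<subseteq> {..<k}" "Ys j \<subseteq> {..<j}" using inv jn kn by auto
      show ?thesis
      proof (cases "p k < 3/4")
        case True
        then obtain i where i: "i \<in> Ys k" "p i > 1/2" using Rgen[OF rk _ True] kn by auto
        have "i < n" using i(1) Yk jn kn that by auto
        moreover have "i \<noteq> j" "i \<noteq> k" using i(1) Ykn jn(2) kn(2) by auto
        ultimately have False using three[of i j k] i(2) jn(1) kn(1) that(3) bj bk by simp
        then show ?thesis by simp
      next
        case k4: False
        show ?thesis
        proof (cases "p j < 3/4")
          case True
          then obtain i where i: "i \<in> Ys j" "p i > 1/2" using Rgen[OF rj _ True] jn by auto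
          have "i < n" using i(1) Yk jn kn that by auto
          moreover have "i \<noteq> j" "i \<noteq> k" using i(1) Ykn jn(2) kn(2) by auto
          ultimately have False using three[of i j k] i(2) jn(1) kn(1) that(3) bj bk by simp
          then show ?thesis by simp
        next
          case j4: False
          obtain S where S: "S \<subseteq> Ys k" "load p S > 3/4 * p k" using rk k4 unfolding REJ_def by auto
          have fk: "finite (Ys k)" using finite_subset[OF Yk(1) finite_lessThan] .
          have "\<forall>i\<in>Ys k. 0 \<le> p i" using Yk(1) kn pos by (auto simp: less_imp_le)
          then have "load p S \<le> load p (Ys k)" using S fk by (intro load_mono) auto
          moreover have "load p (insert j (insert k (Ys k))) = p j + (p k + load p (Ys k))"
          proof -
            have kY: "k \<notin> Ys k" using Yk by auto
            have jY: "j \<notin> insert k (Ys k)" using Ykn jn that by auto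
            show ?thesis using load_insert[OF fk kY, of p] load_insert[OF _ jY, of p] fk by simp
          qed
          moreover have "load p (insert j (insert k (Ys k))) \<le> load p {..<n}"
            using Yk jn kn pos by (intro load_mono) auto
          ultimately show ?thesis using T k4 j4 S(2) by linarith
        qed
      qed
    qed
    have R1: "R = {} \<or> (\<exists>j. R = {j})"
    proof (cases "R = {}")
      case False
      then obtain j where j: "j \<in> R" by auto
      have "R = {j}"
      proof
        show "R \<subseteq> {j}"
        proof
          fix k assume k: "k \<in> R"
          show "k \<in> {j}"
            using Rle[OF j k] Rle[OF k j] by (cases "j < k"; cases "k < j") auto
        qed
      qed (use j in auto)
      then show ?thesis by blast
    qed simp
    have O1pos: "\<forall>i\<in>O1. 0 \<le> p i" using O1n pos by (auto simp: less_imp_le)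
    have fO1: "finite O1" using finite_subset[OF O1n finite_lessThan] .
    have "load p G \<le> load p O1" by (rule load_mono[OF fO1 GO1 O1pos])
    then have lG: "load p G \<le> 1" using O1l by simp
    show ?thesis
    proof (cases "R = {}")
      case True
      then show ?thesis using lGR lG by (simp add: load_def)
    next
      case False
      then obtain j where Rj: "R = {j}" using R1 by auto
      then have jR: "j \<in> R" by simp
      then have jn: "j < n" "g j = 2" "j \<notin> Ys n" unfolding R_def by auto
      have rj: "REJ p g j (Ys j)" using Rrej jR by auto
      have lR: "load p R = p j" using Rj by (simp add: load_def)
      have jG: "j \<notin> G" using jn unfolding G_def by auto
      have Yj: "Ys j \<subseteq> {..<j}" "\<forall>i\<in>Ys j. g i = 2" using inv[of j] jn by auto
      have fG1: "finite G" using fG by simp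
      have lGi: "load p G + p i \<le> 1" if "i \<in> O1" "i \<notin> G" for i
      proof -
        have "insert i G \<subseteq> O1" using GO1 that by blast
        then have "load p (insert i G) \<le> load p O1" by (rule load_mono[OF fO1 _ O1pos])
        then show ?thesis using load_insert[OF fG1 that(2)] O1l by simp
      qed
      show ?thesis
      proof (cases "j \<in> S0")
        case False
        then have "j \<in> O1" using jn O1_def by auto
        then show ?thesis using lGi[of j] jG lGR lR by simp
      next
        case jS: True
        show ?thesis
        proof (cases "p j < 3/4")
          case True
          then obtain i where i: "i \<in> Ys j" "p i + p j > 5/4" using rj unfolding REJ_def by auto
          have inn: "i < n" "i \<noteq> j" using i Yj jn by auto
          have "i \<notin> S0"
          proof
            assume "i \<in> S0"
            then have "p i + p j \<le> 1" by (rule pair2[OF _ jS inn(2)])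
            then show False using i(2) by simp
          qed
          then have "i \<in> O1" "i \<notin> G" using inn Yj i unfolding O1_def G_def by auto
          then show ?thesis using lGi[of i] lGR lR i True by simp
        next
          case j4: False
          obtain S where S: "S \<subseteq> Ys j" "load p S > 3/4 * p j" "\<forall>i\<in>S. p i > 1 - p j"
            using rj j4 unfolding REJ_def by auto
          have SO: "S \<subseteq> O1"
          proof
            fix i assume iS: "i \<in> S"
            have inn: "i < n" "i \<noteq> j" using iS S Yj jn by auto
            have "i \<notin> S0"
            proof
              assume "i \<in> S0"
              then have "p i + p j \<le> 1" by (rule pair2[OF _ jS inn(2)])
              moreover have "p i > 1 - p j" using S(3) iS by blast
              ultimately show False by linarith
            qed
            then show "i \<in> O1" using inn O1_def by auto
          qed
          have SG: "S \<inter> G = {}" using S(1) Yj unfolding G_def by auto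
          have fS: "finite S" using finite_subset[OF SO fO1] .
          have "G \<union> S \<subseteq> O1" using GO1 SO by blast
          then have "load p (G \<union> S) \<le> load p O1" by (rule load_mono[OF fO1 _ O1pos])
          moreover have "load p (G \<union> S) = load p G + load p S" using load_union[OF fG1 fS, of p] SG by (simp add: Int_commute)
          ultimately show ?thesis using lGR lR O1l S(2) p1[OF jn(1)] by linarith
        qed
      qed
    qed
  qed
  show ?thesis using mig feas m1 Yn(3) unfolding makespan_def by auto
qed


theorem mainTheorem5:
  fixes p :: "nat \<Rightarrow> real" and g :: "nat \<Rightarrow> nat" and n :: nat
  assumes valid: "\<forall>i<n. 0 < p i \<and> g i \<in> {1, 2}"
    and opt1: "opt_makespan p g n = 1"
  shows "(\<exists>Ys. B_run p g n Ys)
    \<and> (\<forall>Ys. B_run p g n Ys \<longrightarrow>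
          (\<forall>j<n. migrated p j (Ys j) (Ys (Suc j)) \<le> 3/4 * p j)
        \<and> feasible g n (Ys n)
        \<and> makespan p n (Ys n) \<le> 5/4)
    \<and> (\<forall>M::real. M \<ge> 3/4 \<longrightarrow> (\<forall>Ys. B_run p g n Ys \<longrightarrow>
          (\<forall>j<n. migrated p j (Ys j) (Ys (Suc j)) \<le> M * p j)
        \<and> feasible g n (Ys n)
        \<and> makespan p n (Ys n) / opt_makespan p g n \<le> 5/4))"
proof -
  obtain S0 where S0: "feasible g n S0" "load p ({..<n} - S0) \<le> 1" "load p S0 \<le> 1"
    using opt_exists[OF opt1] by blast
  have R: "\<forall>Ys. B_run p g n Ys \<longrightarrow>
          (\<forall>j<n. migrated p j (Ys j) (Ys (Suc j)) \<le> 3/4 * p j)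
        \<and> feasible g n (Ys n)
        \<and> makespan p n (Ys n) \<le> 5/4"
    using run_facts[OF valid S0] by blast
  have R3: "\<forall>M::real. M \<ge> 3/4 \<longrightarrow> (\<forall>Ys. B_run p g n Ys \<longrightarrow>
          (\<forall>j<n. migrated p j (Ys j) (Ys (Suc j)) \<le> M * p j)
        \<and> feasible g n (Ys n)
        \<and> makespan p n (Ys n) / opt_makespan p g n \<le> 5/4)"
  proof (intro allI impI)
    fix M :: real and Ys assume M: "M \<ge> 3/4" and r: "B_run p g n Ys"
    have h: "(\<forall>j<n. migrated p j (Ys j) (Ys (Suc j)) \<le> 3/4 * p j)"
      "feasible g n (Ys n)" "makespan p n (Ys n) \<le> 5/4" using conjunct1[OF R[rule_format, OF r]] conjunct2[OF R[rule_format, OF r]] by simp_all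
    have "\<forall>j<n. migrated p j (Ys j) (Ys (Suc j)) \<le> M * p j"
    proof (intro allI impI)
      fix j assume j: "j < n"
      have "3/4 * p j \<le> M * p j" using M valid j by (intro mult_right_mono) auto
      then show "migrated p j (Ys j) (Ys (Suc j)) \<le> M * p j" using h(1) j by force
    qed
    then show "(\<forall>j<n. migrated p j (Ys j) (Ys (Suc j)) \<le> M * p j)
        \<and> feasible g n (Ys n)
        \<and> makespan p n (Ys n) / opt_makespan p g n \<le> 5/4" using h(2,3) opt1 by simp
  qed
  have E: "\<exists>Ys. B_run p g n Ys" by (rule run_exists)
  show ?thesis using conjI[OF E conjI[OF R R3]] .
qed


end
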